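(* Let $(X,d)$ be a metric space, $K\subseteq X$ compact and let $\varepsilon>0$. Then \[ M_{\omega}(K,\varepsilon)\le M^{*}(K,\varepsilon)\le N^{*}(K,\varepsilon)\le N_{\omega}(K,\varepsilon). \]
   Context: $X$ carries the metric topology; $B(x,\varepsilon)=\{y\in X:d(x,y)\le\varepsilon\}$ and $\mathbbm{1}_A$ is the indicator of $A$. $\mathcal{D}_+(X)$ denotes the non-negative finite discrete measures on $X$ (finite sums $\sum_i\omega_i\delta_{x_i}$, $\omega_i\ge0$) and $\mathcal{B}_+(X)$ the non-negative Borel measures on $X$. Define $N_\omega(K,\varepsilon)=\inf\{\nu(X):\nu\in\mathcal{D}_+(X),\ \int\mathbbm{1}_{B(y,\varepsilon)}(x)\,d\nu(y)\ge\mathbbm{1}_K(x)\ \forall x\in X\}$; $N^{*}(K,\varepsilon)$ the same infimum over $\mu\in\mathcal{B}_+(X)$; $M_\omega(K,\varepsilon)=\sup\{\rho(K):\rho\in\mathcal{D}_+(X),\ \int\mathbbm{1}_{B(y,\varepsilon)}(x)\,d\rho(y)\le1\ \forall x\in X\}$; $M^{*}(K,\varepsilon)$ the same supremum over $\rho\in\mathcal{B}_+(X)$. *)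

theory Defs
  imports "HOL-Analysis.Analysis"
begin

text \<open>The metric space X is the type 'a (X = UNIV).
 A non-negative finite discrete measure sum_i w_i delta_{x_i} is represented by a
 finite set S of atoms together with non-negative weights w.\<close>

definition disc_cover :: "'a::metric_space set \<Rightarrow> real \<Rightarrow> 'a set \<Rightarrow> ('a \<Rightarrow> real) \<Rightarrow> bool" where
  "disc_cover K e S w \<longleftrightarrow> finite S \<and> (\<forall>y\<in>S. w y \<ge> 0) \<and>
     (\<forall>x. (\<Sum>y\<in>S. w y * indicator (cball y e) x) \<ge> indicator K x)"

definition disc_pack :: "'a::metric_space set \<Rightarrow> real \<Rightarrow> 'a set \<Rightarrow> ('a \<Rightarrow> real) \<Rightarrow> bool" where
  "disc_pack K e S w \<longleftrightarrow> finite S \<and> (\<forall>y\<in>S. w y \<ge> 0) \<and>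
     (\<forall>x. (\<Sum>y\<in>S. w y * indicator (cball y e) x) \<le> (1::real))"

definition N_omega :: "'a::metric_space set \<Rightarrow> real \<Rightarrow> ennreal" where
  "N_omega K e = Inf {ennreal (\<Sum>y\<in>S. w y) | S w. disc_cover K e S w}"

definition M_omega :: "'a::metric_space set \<Rightarrow> real \<Rightarrow> ennreal" where
  "M_omega K e = Sup {ennreal (\<Sum>y\<in>S\<inter>K. w y) | S w. disc_pack K e S w}"

definition N_star :: "'a::metric_space set \<Rightarrow> real \<Rightarrow> ennreal" where
  "N_star K e = Inf {emeasure \<mu> UNIV | \<mu>. sets \<mu> = sets borel \<and>
     (\<forall>x. (\<integral>\<^sup>+ y. indicator (cball y e) x \<partial>\<mu>) \<ge> indicator K x)}"

definition M_star :: "'a::metric_space set \<Rightarrow> real \<Rightarrow> ennreal" where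
  "M_star K e = Sup {emeasure \<rho> K | \<rho>. sets \<rho> = sets borel \<and>
     (\<forall>x. (\<integral>\<^sup>+ y. indicator (cball y e) x \<partial>\<rho>) \<le> 1)}"

end

theory Submission imports Defs begin

definition dmeas :: "'a::metric_space set \<Rightarrow> ('a \<Rightarrow> real) \<Rightarrow> 'a measure" where
  "dmeas S w = measure_of (space borel) (sets borel) (\<lambda>A. \<Sum>y\<in>S. ennreal (w y) * indicator A y)"

lemma sets_dmeas[simp, measurable_cong]: "sets (dmeas S w) = sets borel"
  by (simp add: dmeas_def sets.sigma_sets_eq[of borel, simplified])

lemma emeasure_dmeas:
  assumes "A \<in> sets borel"
  shows "emeasure (dmeas S w) A = (\<Sum>y\<in>S. ennreal (w y) * indicator A y)"
proof (rule emeasure_measure_of[OF dmeas_def])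
  show "sets borel \<subseteq> Pow (space borel)" by (rule sets.space_closed)
  show "positive (sets (dmeas S w)) (\<lambda>A. \<Sum>y\<in>S. ennreal (w y) * indicator A y)"
    by (simp add: positive_def)
  from assms show "A \<in> sets (dmeas S w)" by simp
  show "countably_additive (sets (dmeas S w)) (\<lambda>A. \<Sum>y\<in>S. ennreal (w y) * indicator A y)"
  proof (rule countably_additiveI)
    fix A :: "nat \<Rightarrow> 'a set" assume d: "disjoint_family A"
    have "(\<Sum>i. \<Sum>y\<in>S. ennreal (w y) * indicator (A i) y) = (\<Sum>y\<in>S. \<Sum>i. ennreal (w y) * indicator (A i) y)"
      by (rule suminf_sum) auto
    also have "\<dots> = (\<Sum>y\<in>S. ennreal (w y) * indicator (\<Union>i. A i) y)"
      using suminf_indicator[OF d] by simp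
    finally show "(\<Sum>i. \<Sum>y\<in>S. ennreal (w y) * indicator (A i) y) = (\<Sum>y\<in>S. ennreal (w y) * indicator (\<Union>i. A i) y)" .
  qed
qed

lemma emeasure_dmeas_real:
  assumes "A \<in> sets borel" "\<forall>y\<in>S. w y \<ge> 0"
  shows "emeasure (dmeas S w) A = ennreal (\<Sum>y\<in>S. w y * indicator A y)"
proof -
  have "ennreal (\<Sum>y\<in>S. w y * indicator A y) = (\<Sum>y\<in>S. ennreal (w y * indicator A y))"
    using assms by (intro sum_ennreal[symmetric]) (auto simp: indicator_def)
  also have "\<dots> = (\<Sum>y\<in>S. ennreal (w y) * indicator A y)"
    by (intro sum.cong) (auto simp: indicator_def)
  finally show ?thesis using assms by (simp add: emeasure_dmeas)
qed

lemma ind_swap: "(indicator (cball y e) x :: 'b::zero_neq_one) = indicator (cball x e) y"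
  by (simp add: indicator_def dist_commute)

lemma nn_integral_ball:
  assumes "sets M = sets borel"
  shows "(\<integral>\<^sup>+ y. indicator (cball y e) x \<partial>M) = emeasure M (cball x e)"
proof -
  have "(\<integral>\<^sup>+ y. indicator (cball y e) x \<partial>M) = (\<integral>\<^sup>+ y. indicator (cball x e) y \<partial>M)"
    by (simp add: ind_swap)
  also have "\<dots> = emeasure M (cball x e)"
    using assms by (intro nn_integral_indicator) simp
  finally show ?thesis .
qed

lemma part1:
  fixes K :: "'a::metric_space set"
  assumes "compact K"
  shows "M_omega K e \<le> M_star K e"
  unfolding M_omega_def M_star_def
proof (rule Sup_mono)
  fix a assume "a \<in> {ennreal (\<Sum>y\<in>S\<inter>K. w y) | S w. disc_pack K e S w}"
  then obtain S w where a: "a = ennreal (\<Sum>y\<in>S\<inter>K. w y)" and p: "disc_pack K e S w" by blast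
  have fin: "finite S" and w: "\<forall>y\<in>S. w y \<ge> 0"
    and pk: "\<And>x. (\<Sum>y\<in>S. w y * indicator (cball y e) x) \<le> (1::real)"
    using p unfolding disc_pack_def by auto
  have Kb: "K \<in> sets borel" using assms by (simp add: compact_imp_closed)
  have "emeasure (dmeas S w) K = ennreal (\<Sum>y\<in>S. w y * indicator K y)"
    using Kb w by (rule emeasure_dmeas_real)
  also have "(\<Sum>y\<in>S. w y * indicator K y) = (\<Sum>y\<in>S\<inter>K. w y)"
    using fin by (simp add: sum.inter_restrict indicator_def if_distrib cong: if_cong)
  finally have eq: "emeasure (dmeas S w) K = a" using a by simp
  have "\<forall>x. (\<integral>\<^sup>+ y. indicator (cball y e) x \<partial>dmeas S w) \<le> 1"
  proof
    fix x
    have "(\<integral>\<^sup>+ y. indicator (cball y e) x \<partial>dmeas S w) = emeasure (dmeas S w) (cball x e)"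
      by (rule nn_integral_ball) simp
    also have "\<dots> = ennreal (\<Sum>y\<in>S. w y * indicator (cball x e) y)"
      using w by (intro emeasure_dmeas_real) auto
    also have "(\<Sum>y\<in>S. w y * indicator (cball x e) y) = (\<Sum>y\<in>S. w y * indicator (cball y e) x)"
      by (simp add: ind_swap)
    also have "ennreal \<dots> \<le> 1" using pk[of x] by simp
    finally show "(\<integral>\<^sup>+ y. indicator (cball y e) x \<partial>dmeas S w) \<le> 1" .
  qed
  then show "\<exists>b\<in>{emeasure \<rho> K | \<rho>. sets \<rho> = sets borel \<and>
     (\<forall>x. (\<integral>\<^sup>+ y. indicator (cball y e) x \<partial>\<rho>) \<le> 1)}. a \<le> b"
    using eq by (intro bexI[of _ a]) (auto intro!: exI[of _ "dmeas S w"])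
qed

lemma part3:
  fixes K :: "'a::metric_space set"
  shows "N_star K e \<le> N_omega K e"
  unfolding N_omega_def N_star_def
proof (rule Inf_mono)
  fix a assume "a \<in> {ennreal (\<Sum>y\<in>S. w y) | S w. disc_cover K e S w}"
  then obtain S w where a: "a = ennreal (\<Sum>y\<in>S. w y)" and p: "disc_cover K e S w" by blast
  have fin: "finite S" and w: "\<forall>y\<in>S. w y \<ge> 0"
    and pk: "\<And>x. (\<Sum>y\<in>S. w y * indicator (cball y e) x) \<ge> (indicator K x::real)"
    using p unfolding disc_cover_def by auto
  have "emeasure (dmeas S w) UNIV = ennreal (\<Sum>y\<in>S. w y * indicator UNIV y)"
    using w by (intro emeasure_dmeas_real) auto
  then have eq: "emeasure (dmeas S w) UNIV = a" using a by simp
  have "\<forall>x. (\<integral>\<^sup>+ y. indicator (cball y e) x \<partial>dmeas S w) \<ge> indicator K x"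
  proof
    fix x
    have "(\<integral>\<^sup>+ y. indicator (cball y e) x \<partial>dmeas S w) = emeasure (dmeas S w) (cball x e)"
      by (rule nn_integral_ball) simp
    also have "\<dots> = ennreal (\<Sum>y\<in>S. w y * indicator (cball x e) y)"
      using w by (intro emeasure_dmeas_real) auto
    also have "(\<Sum>y\<in>S. w y * indicator (cball x e) y) = (\<Sum>y\<in>S. w y * indicator (cball y e) x)"
      by (simp add: ind_swap)
    finally have e1: "(\<integral>\<^sup>+ y. indicator (cball y e) x \<partial>dmeas S w) = ennreal (\<Sum>y\<in>S. w y * indicator (cball y e) x)" .
    have "(indicator K x :: ennreal) = ennreal (indicator K x)" by (simp add: indicator_def)
    also have "\<dots> \<le> ennreal (\<Sum>y\<in>S. w y * indicator (cball y e) x)"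
      using pk[of x] by (rule ennreal_leI)
    finally show "(\<integral>\<^sup>+ y. indicator (cball y e) x \<partial>dmeas S w) \<ge> indicator K x" using e1 by simp
  qed
  then show "\<exists>b\<in>{emeasure \<mu> UNIV | \<mu>. sets \<mu> = sets borel \<and>
     (\<forall>x. (\<integral>\<^sup>+ y. indicator (cball y e) x \<partial>\<mu>) \<ge> indicator K x)}. b \<le> a"
    using eq by (intro bexI[of _ a]) (auto intro!: exI[of _ "dmeas S w"])
qed

lemma net:
  fixes K :: "'a::metric_space set"
  assumes "compact K" "r > 0"
  obtains F where "finite F" "F \<subseteq> K" "K \<subseteq> (\<Union>q\<in>F. ball q r)"
proof -
  have "K \<subseteq> (\<Union>q\<in>K. ball q r)" using assms(2) by auto
  from compactE_image[OF assms(1) _ this] obtain F where "F \<subseteq> K" "finite F" "K \<subseteq> (\<Union>q\<in>F. ball q r)"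
    by auto
  then show ?thesis using that by blast
qed

lemma pack_finite:
  fixes K :: "'a::metric_space set"
  assumes "compact K" "e > 0" "sets \<rho> = sets borel"
    and pk: "\<forall>x. (\<integral>\<^sup>+ y. indicator (cball y e) x \<partial>\<rho>) \<le> 1"
  shows "emeasure \<rho> K < \<infinity>"
proof -
  obtain F where F: "finite F" "F \<subseteq> K" "K \<subseteq> (\<Union>q\<in>F. ball q e)" using net[OF assms(1,2)] by blast
  have "K \<subseteq> (\<Union>q\<in>F. cball q e)"
  proof
    fix x assume "x \<in> K"
    then obtain q where "q \<in> F" "dist q x < e" using F(3) by auto
    then show "x \<in> (\<Union>q\<in>F. cball q e)" by (auto intro!: bexI[of _ q])
  qed
  moreover have cb: "cball q e \<in> sets \<rho>" for q using assms(3) by simp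
  have "(\<Union>q\<in>F. cball q e) \<in> sets \<rho>" using F(1) cb by (rule sets.finite_UN)
  ultimately have "emeasure \<rho> K \<le> emeasure \<rho> (\<Union>q\<in>F. cball q e)"
    by (rule emeasure_mono)
  also have "\<dots> \<le> (\<Sum>q\<in>F. emeasure \<rho> (cball q e))"
    using F(1) cb by (intro emeasure_subadditive_finite) auto
  also have "\<dots> \<le> (\<Sum>q\<in>F. 1)"
  proof (intro sum_mono)
    fix q show "emeasure \<rho> (cball q e) \<le> 1"
      using pk nn_integral_ball[OF assms(3), of e q] by metis
  qed
  also have "\<dots> < \<infinity>" by (simp add: of_nat_less_top)
  finally show ?thesis .
qed

lemma prodset:
  fixes K :: "'a::metric_space set"
  assumes "compact K"
  shows "{(x,y). x\<in>K \<and> dist x y \<le> e} \<in> sets (borel \<Otimes>\<^sub>M borel)"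
proof -
  define r where "r n = 1 / real (Suc n)" for n
  have rpos: "r n > 0" for n by (simp add: r_def)
  have "\<exists>F. finite F \<and> F \<subseteq> K \<and> K \<subseteq> (\<Union>q\<in>F. ball q (r n))" for n
  proof -
    obtain F where "finite F" "F \<subseteq> K" "K \<subseteq> (\<Union>q\<in>F. ball q (r n))"
      by (rule net[OF assms rpos[of n]])
    then show ?thesis by (intro exI[of _ F]) simp
  qed
  then have "\<exists>F. \<forall>n. finite (F n) \<and> F n \<subseteq> K \<and> K \<subseteq> (\<Union>q\<in>F n. ball q (r n))"
    by (rule choice[OF allI])
  then obtain F where F: "\<And>n. finite (F n)" "\<And>n. F n \<subseteq> K" "\<And>n. K \<subseteq> (\<Union>q\<in>F n. ball q (r n))"
    by blast
  define A where "A n = (\<Union>q\<in>F n. ball q (r n) \<times> cball q (e + r n))" for n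
  have Am: "A n \<in> sets (borel \<Otimes>\<^sub>M borel)" for n
  proof -
    have "ball q (r n) \<times> cball q (e + r n) \<in> sets (borel \<Otimes>\<^sub>M borel)" for q
      by (rule pair_measureI[OF borel_open[OF open_ball] borel_closed[OF closed_cball]])
    then show ?thesis unfolding A_def by (rule sets.finite_UN[OF F(1)])
  qed
  have Km: "K \<times> UNIV \<in> sets (borel \<Otimes>\<^sub>M (borel :: 'a measure))"
    by (rule pair_measureI[OF borel_closed[OF compact_imp_closed[OF assms]]]) simp
  have eq: "{(x,y). x\<in>K \<and> dist x y \<le> e} = (K \<times> UNIV) \<inter> (\<Inter>n. A n)"
  proof (intro equalityI subsetI)
    fix p assume "p \<in> {(x,y). x\<in>K \<and> dist x y \<le> e}"
    then obtain x y where p: "p = (x,y)" "x \<in> K" "dist x y \<le> e" by auto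
    have "(x,y) \<in> A n" for n
    proof -
      obtain q where q: "q \<in> F n" "dist q x < r n" using F(3)[of n] p(2) by auto
      have "dist q y \<le> e + r n" using dist_triangle[of q y x] q p(3) dist_commute[of y x] by linarith
      then have "(x,y) \<in> ball q (r n) \<times> cball q (e + r n)" using q(2) by simp
      then show ?thesis using q(1) unfolding A_def by blast
    qed
    then show "p \<in> (K \<times> UNIV) \<inter> (\<Inter>n. A n)" using p by auto
  next
    fix p assume "p \<in> (K \<times> UNIV) \<inter> (\<Inter>n. A n)"
    then obtain x y where p: "p = (x,y)" "x \<in> K" "\<And>n. (x,y) \<in> A n" by auto
    have le: "dist x y \<le> e + 2 * r n" for n
    proof -
      obtain q where "(x,y) \<in> ball q (r n) \<times> cball q (e + r n)" using p(3)[of n] unfolding A_def by blast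
      then have q: "dist q x < r n" "dist q y \<le> e + r n" by simp_all
      show ?thesis using dist_triangle[of x y q] q dist_commute[of x q] by linarith
    qed
    have "dist x y \<le> e"
    proof (rule ccontr)
      assume "\<not> dist x y \<le> e"
      then have "(dist x y - e) / 2 > 0" by simp
      then have "\<exists>n. inverse (real (Suc n)) < (dist x y - e) / 2" by (rule reals_Archimedean)
      then obtain n where "inverse (real (Suc n)) < (dist x y - e) / 2" ..
      moreover have "r n = inverse (real (Suc n))" unfolding r_def by (simp add: inverse_eq_divide)
      ultimately have "r n < (dist x y - e) / 2" by (simp only:)
      then have "2 * r n < dist x y - e" by (simp add: less_divide_eq mult.commute)
      then show False using le[of n] by simp
    qed
    then show "p \<in> {(x,y). x\<in>K \<and> dist x y \<le> e}" using p by auto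
  qed
  have "(\<Inter>n. A n) \<in> sets (borel \<Otimes>\<^sub>M borel)"
    by (rule sets.countable_INT) (use Am in blast, simp)
  then show ?thesis unfolding eq using Km by (rule sets.Int[rotated])
qed

lemma duality:
  fixes K :: "'a::metric_space set"
  assumes cK: "compact K" and e: "e > 0" and sr: "sets \<rho> = sets borel"
    and pk: "\<forall>x. (\<integral>\<^sup>+ y. indicator (cball y e) x \<partial>\<rho>) \<le> 1"
    and sm: "sets \<mu> = sets borel"
    and cv: "\<forall>x. (\<integral>\<^sup>+ y. indicator (cball y e) x \<partial>\<mu>) \<ge> indicator K x"
  shows "emeasure \<rho> K \<le> emeasure \<mu> UNIV"
proof (cases "emeasure \<mu> UNIV = \<infinity>")
  case True then show ?thesis by simp
next
  case False
  have spm: "space \<mu> = UNIV" using sets_eq_imp_space_eq[OF sm] by simp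
  have spr: "space \<rho> = UNIV" using sets_eq_imp_space_eq[OF sr] by simp
  have Kb: "K \<in> sets borel" using cK by (simp add: compact_imp_closed)
  have Kr: "K \<in> sets \<rho>" using Kb sr by simp
  define \<rho>' where "\<rho>' = density \<rho> (indicator K)"
  have sr': "sets \<rho>' = sets borel" by (simp add: \<rho>'_def sr)
  have spr': "space \<rho>' = UNIV" using sets_eq_imp_space_eq[OF sr'] by simp
  have r'A: "emeasure \<rho>' A = emeasure \<rho> (K \<inter> A)" if "A \<in> sets borel" for A
    unfolding \<rho>'_def using Kr that sr by (intro emeasure_restricted) auto
  have "emeasure \<rho>' (space \<rho>') = emeasure \<rho> K" using r'A[of UNIV] spr' by simp
  also have "\<dots> < \<infinity>" by (rule pack_finite[OF cK e sr pk])
  finally have f1: "finite_measure \<rho>'" by (intro finite_measureI) simp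
  have f2: "finite_measure \<mu>" using False spm by (intro finite_measureI) simp
  interpret pair_sigma_finite \<rho>' \<mu>
    unfolding pair_sigma_finite_def using f1 f2 by (simp add: finite_measure.axioms(1))
  define S where "S = {(x,y). x\<in>K \<and> dist x y \<le> e}"
  have Sm: "S \<in> sets (\<rho>' \<Otimes>\<^sub>M \<mu>)"
    unfolding S_def sets_pair_measure_cong[OF sr' sm] by (rule prodset[OF cK])
  have meas: "case_prod (\<lambda>x y. indicator S (x,y) :: ennreal) \<in> borel_measurable (\<rho>' \<Otimes>\<^sub>M \<mu>)"
  proof -
    have "case_prod (\<lambda>x y. indicator S (x,y) :: ennreal) = indicator S" by (simp add: fun_eq_iff)
    then show ?thesis using borel_measurable_indicator[OF Sm] by simp
  qed
  have "emeasure \<rho> K = emeasure \<rho>' K" using r'A[OF Kb] by simp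
  also have "\<dots> = (\<integral>\<^sup>+x. indicator K x \<partial>\<rho>')" using Kb sr' by simp
  also have "\<dots> \<le> (\<integral>\<^sup>+x. (\<integral>\<^sup>+y. indicator S (x,y) \<partial>\<mu>) \<partial>\<rho>')"
  proof (rule nn_integral_mono)
    fix x
    show "indicator K x \<le> (\<integral>\<^sup>+y. indicator S (x,y) \<partial>\<mu>)"
    proof (cases "x \<in> K")
      case True
      have "(\<integral>\<^sup>+y. indicator S (x,y) \<partial>\<mu>) = (\<integral>\<^sup>+y. indicator (cball y e) x \<partial>\<mu>)"
        using True by (intro nn_integral_cong) (simp add: S_def indicator_def dist_commute)
      then show ?thesis using cv by simp
    qed simp
  qed
  also have "\<dots> = (\<integral>\<^sup>+y. (\<integral>\<^sup>+x. indicator S (x,y) \<partial>\<rho>') \<partial>\<mu>)"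
    using Fubini'[OF meas] by simp
  also have "\<dots> \<le> (\<integral>\<^sup>+y. 1 \<partial>\<mu>)"
  proof (rule nn_integral_mono)
    fix y
    have "(\<integral>\<^sup>+x. indicator S (x,y) \<partial>\<rho>') \<le> (\<integral>\<^sup>+x. indicator (cball y e) x \<partial>\<rho>')"
      by (intro nn_integral_mono) (auto simp: S_def indicator_def dist_commute)
    also have "\<dots> = emeasure \<rho>' (cball y e)" using sr' by simp
    also have "\<dots> = emeasure \<rho> (K \<inter> cball y e)" by (rule r'A) simp
    also have "\<dots> \<le> emeasure \<rho> (cball y e)" using sr by (intro emeasure_mono) auto
    also have "\<dots> = (\<integral>\<^sup>+ z. indicator (cball z e) y \<partial>\<rho>)" by (rule nn_integral_ball[OF sr, symmetric])
    also have "\<dots> \<le> 1" using pk by simp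
    finally show "(\<integral>\<^sup>+x. indicator S (x,y) \<partial>\<rho>') \<le> 1" .
  qed
  also have "\<dots> = emeasure \<mu> UNIV" using spm by simp
  finally show ?thesis .
qed

lemma part2:
  fixes K :: "'a::metric_space set"
  assumes "compact K" "e > 0"
  shows "M_star K e \<le> N_star K e"
  unfolding M_star_def N_star_def
proof (rule Sup_least)
  fix a assume "a \<in> {emeasure \<rho> K | \<rho>. sets \<rho> = sets borel \<and>
     (\<forall>x. (\<integral>\<^sup>+ y. indicator (cball y e) x \<partial>\<rho>) \<le> 1)}"
  then obtain \<rho> where a: "a = emeasure \<rho> K" and r: "sets \<rho> = sets borel"
    "\<forall>x. (\<integral>\<^sup>+ y. indicator (cball y e) x \<partial>\<rho>) \<le> 1" by blast
  show "a \<le> Inf {emeasure \<mu> UNIV | \<mu>. sets \<mu> = sets borel \<and>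
     (\<forall>x. (\<integral>\<^sup>+ y. indicator (cball y e) x \<partial>\<mu>) \<ge> indicator K x)}"
  proof (rule Inf_greatest)
    fix b assume "b \<in> {emeasure \<mu> UNIV | \<mu>. sets \<mu> = sets borel \<and>
     (\<forall>x. (\<integral>\<^sup>+ y. indicator (cball y e) x \<partial>\<mu>) \<ge> indicator K x)}"
    then obtain \<mu> where b: "b = emeasure \<mu> UNIV" and m: "sets \<mu> = sets borel"
      "\<forall>x. (\<integral>\<^sup>+ y. indicator (cball y e) x \<partial>\<mu>) \<ge> indicator K x" by blast
    show "a \<le> b" unfolding a b by (rule duality[OF assms r m])
  qed
qed

theorem theorem2p12:
  fixes K :: "'a::metric_space set" and e :: real
  assumes "compact K" and "e > 0"
  shows "M_omega K e \<le> M_star K e \<and> M_star K e \<le> N_star K e \<and> N_star K e \<le> N_omega K e"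
  using part1[OF assms(1)] part2[OF assms] part3 by blast

end
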